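(* Let $T\in\mathcal L(\mathcal P_n)$, $T\ne0$, and suppose there is a constant $C>0$ such that for each nonconstant $f\in\mathcal P_n$ there exist $u\in Z(f)$ and $v\in Z(Tf)$ with $|u-v|\le C$. Then $$T=a_0I+a_1D+\cdots+a_nD^n,\qquad\text{where } a_k=(T\phi_k)(0)\ (k=0,\dots,n)\ \text{and}\ a_0\neq0.$$
   Context: Let $n\ge 1$ be an integer and $\mathcal P_n$ the complex vector space of polynomials in one complex variable of degree at most $n$; $\mathcal L(\mathcal P_n)$ is the set of linear operators $\mathcal P_n\to\mathcal P_n$; $\phi_k(z)=z^k/k!$; $D$ is differentiation on $\mathcal P_n$ and $I$ the identity. For a nonzero $f$, $Z(f)$ is the multiset of roots of $f$ (with multiplicity; empty for nonzero constants); $Z(0)=\mathbb C$. *)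

theory Defs
  imports "HOL-Computational_Algebra.Polynomial"
begin

definition Pn :: "nat \<Rightarrow> complex poly set" where
  "Pn n = {p. degree p \<le> n}"

text \<open>T is a linear operator P_n to P_n (its values outside P_n are irrelevant).\<close>
definition lin_op_Pn :: "nat \<Rightarrow> (complex poly \<Rightarrow> complex poly) \<Rightarrow> bool" where
  "lin_op_Pn n T \<longleftrightarrow>
     (\<forall>p\<in>Pn n. T p \<in> Pn n) \<and>
     (\<forall>p\<in>Pn n. \<forall>q\<in>Pn n. T (p + q) = T p + T q) \<and>
     (\<forall>c. \<forall>p\<in>Pn n. T (smult c p) = smult c (T p))"

definition Zset :: "complex poly \<Rightarrow> complex set" where
  "Zset f = (if f = 0 then UNIV else {z. poly f z = 0})"

definition phi :: "nat \<Rightarrow> complex poly" where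
  "phi k = monom (1 / of_nat (fact k)) k"

end

theory Submission imports Defs begin

lemma Pn_add: "p \<in> Pn n \<Longrightarrow> q \<in> Pn n \<Longrightarrow> p + q \<in> Pn n"
  by (auto simp: Pn_def intro: degree_add_le)
lemma Pn_smult: "p \<in> Pn n \<Longrightarrow> smult c p \<in> Pn n"
  by (auto simp: Pn_def)
lemma Pn_zero: "0 \<in> Pn n" by (simp add: Pn_def)
lemma Pn_sum: "(\<And>i. i \<in> A \<Longrightarrow> p i \<in> Pn n) \<Longrightarrow> sum p A \<in> Pn n"
  by (induction A rule: infinite_finite_induct) (auto simp: Pn_zero Pn_add)

lemma lin_zero: "lin_op_Pn n T \<Longrightarrow> T 0 = 0"
  unfolding lin_op_Pn_def using Pn_zero[of n] by (metis smult_0_left)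

lemma lin_sum:
  assumes "lin_op_Pn n T" "\<And>i. i \<in> A \<Longrightarrow> p i \<in> Pn n"
  shows "T (\<Sum>i\<in>A. smult (c i) (p i)) = (\<Sum>i\<in>A. smult (c i) (T (p i)))"
  using assms(2)
proof (induction A rule: infinite_finite_induct)
  case (infinite A) then show ?case using lin_zero[OF assms(1)] by simp
next
  case empty then show ?case using lin_zero[OF assms(1)] by simp
next
  case (insert x F)
  have add: "\<And>p q. p \<in> Pn n \<Longrightarrow> q \<in> Pn n \<Longrightarrow> T (p + q) = T p + T q"
    and sm: "\<And>c p. p \<in> Pn n \<Longrightarrow> T (smult c p) = smult c (T p)"
    using assms(1) unfolding lin_op_Pn_def by blast+
  have px: "p x \<in> Pn n" using insert.prems by simp
  have pF: "(\<Sum>i\<in>F. smult (c i) (p i)) \<in> Pn n"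
    using insert.prems by (intro Pn_sum Pn_smult) simp
  have "T (\<Sum>i\<in>insert x F. smult (c i) (p i)) = T (smult (c x) (p x) + (\<Sum>i\<in>F. smult (c i) (p i)))"
    using insert.hyps by simp
  also have "\<dots> = T (smult (c x) (p x)) + T (\<Sum>i\<in>F. smult (c i) (p i))"
    using add[OF Pn_smult[OF px] pF] .
  also have "\<dots> = smult (c x) (T (p x)) + (\<Sum>i\<in>F. smult (c i) (T (p i)))"
    using sm[OF px] insert.IH insert.prems by simp
  finally show ?case using insert.hyps by simp
qed

lemma phi_Pn: "m \<le> n \<Longrightarrow> phi m \<in> Pn n"
  unfolding Pn_def phi_def using degree_monom_le[of _ m] by (meson le_trans mem_Collect_eq)

lemma basis_expand:
  assumes "p \<in> Pn n"
  shows "p = (\<Sum>m\<le>n. smult (coeff p m * fact m) (phi m))"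
proof -
  have "p = (\<Sum>m\<le>n. monom (coeff p m) m)"
    using assms by (simp add: Pn_def poly_as_sum_of_monoms')
  also have "\<dots> = (\<Sum>m\<le>n. smult (coeff p m * fact m) (phi m))"
    by (intro sum.cong refl) (simp add: phi_def smult_monom)
  finally show ?thesis .
qed

lemma fact_aux: "of_nat (Suc m) * (1 / fact (Suc m)) = (1 / fact m :: complex)"
proof -
  have nz: "(of_nat (Suc m)::complex) \<noteq> 0" by (rule of_nat_neq_0)
  have "of_nat (Suc m) * (1 / fact (Suc m)) = (of_nat (Suc m) * 1) / (of_nat (Suc m) * fact m :: complex)"
    by (simp only: fact_Suc times_divide_eq_right)
  also have "\<dots> = 1 / fact m" by (rule nonzero_mult_divide_mult_cancel_left[OF nz])
  finally show ?thesis .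
qed

lemma pderiv_phi: "pderiv (phi (Suc m)) = phi m" "pderiv (phi 0) = 0"
proof -
  have "of_nat (Suc m) * (1 / of_nat (fact (Suc m))) = (1 / of_nat (fact m) :: complex)"
    unfolding of_nat_fact
    by (rule fact_aux)
  then show "pderiv (phi (Suc m)) = phi m" by (simp only: phi_def pderiv_monom diff_Suc_1)
  show "pderiv (phi 0) = 0" by (simp add: phi_def pderiv_monom)
qed

lemma pderivs_phi: "(pderiv ^^ k) (phi m) = (if k \<le> m then phi (m - k) else 0)"
proof (induction k)
  case 0 then show ?case by simp
next
  case (Suc k)
  show ?case
  proof (cases "Suc k \<le> m")
    case True
    have e: "m - k = Suc (m - Suc k)" using True by simp
    have "(pderiv ^^ Suc k) (phi m) = pderiv (phi (m - k))" using Suc True by simp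
    also have "\<dots> = phi (m - Suc k)" unfolding e pderiv_phi ..
    finally show ?thesis using True by simp
  next
    case False
    show ?thesis
    proof (cases "k = m")
      case True
      then have "(pderiv ^^ k) (phi m) = phi 0" using Suc.IH by simp
      then show ?thesis using False by (simp add: pderiv_phi)
    next
      case False2: False
      then have "(pderiv ^^ k) (phi m) = 0" using Suc.IH False by simp
      then show ?thesis using False by simp
    qed
  qed
qed

definition psi :: "nat \<Rightarrow> complex poly" where
  "psi i = monom ((-1)^i / of_nat (fact i)) i"

lemma monom_sum: "(\<Sum>i\<in>A. monom (f i) N) = monom (\<Sum>i\<in>A. f i) N"
  by (induction A rule: infinite_finite_induct) (auto simp: add_monom)

lemma psi_phi: "(\<Sum>i\<le>N. psi i * phi (N - i)) = (if N = 0 then 1 else 0)"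
proof (cases "N = 0")
  case True then show ?thesis by (simp add: psi_def phi_def one_pCons)
next
  case False
  have "(\<Sum>i\<le>N. psi i * phi (N - i)) = (\<Sum>i\<le>N. monom ((-1)^i * of_nat (N choose i) / fact N) N)"
  proof (intro sum.cong refl)
    fix i assume "i \<in> {..N}"
    then have i: "i \<le> N" by simp
    have "(-1)^i / of_nat (fact i) * (1 / of_nat (fact (N - i))) = ((-1)^i * of_nat (N choose i) / fact N :: complex)"
    proof -
      have "(of_nat (N choose i) :: complex) / fact N = 1 / (fact i * fact (N - i))"
        unfolding binomial_fact[OF i] by simp
      then show ?thesis by (simp only: of_nat_fact times_divide_eq_right[symmetric]) simp
    qed
    then show "psi i * phi (N - i) = monom ((-1)^i * of_nat (N choose i) / fact N) N"
      using i by (simp add: psi_def phi_def mult_monom)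
  qed
  also have "\<dots> = monom ((\<Sum>i\<le>N. (-1)^i * of_nat (N choose i)) / fact N) N"
    by (simp add: monom_sum sum_divide_distrib)
  also have "\<dots> = 0" using False choose_alternating_sum[of N] by simp
  finally show ?thesis using False by simp
qed


definition q :: "(complex poly \<Rightarrow> complex poly) \<Rightarrow> nat \<Rightarrow> complex poly" where
  "q T k = (\<Sum>j\<le>k. T (phi j) * psi (k - j))"

lemma q_phi: "(\<Sum>k\<le>m. q T k * phi (m - k)) = T (phi m)"
proof -
  define g where "g j i = T (phi j) * psi i * phi (m - (j + i))" for j i
  have "(\<Sum>k\<le>m. q T k * phi (m - k)) = (\<Sum>k\<le>m. \<Sum>j\<le>k. g j (k - j))"
    unfolding q_def g_def sum_distrib_right
    by (intro sum.cong refl) auto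
  also have "\<dots> = (\<Sum>(j,i)\<in>{(j,i). j + i \<le> m}. g j i)"
    by (rule sum.triangle_reindex_eq[symmetric])
  also have "{(j,i). j + i \<le> m} = Sigma {..m} (\<lambda>j. {..m - j})" by auto
  also have "(\<Sum>(j,i)\<in>Sigma {..m} (\<lambda>j. {..m - j}). g j i) = (\<Sum>j\<le>m. \<Sum>i\<le>m - j. g j i)"
    by (rule sum.Sigma[symmetric]) auto
  also have "\<dots> = (\<Sum>j\<le>m. T (phi j) * (\<Sum>i\<le>m - j. psi i * phi (m - j - i)))"
    unfolding g_def sum_distrib_left by (intro sum.cong refl) (simp add: mult.assoc)
  also have "\<dots> = (\<Sum>j\<le>m. T (phi j) * (if m - j = 0 then 1 else 0))"
    by (simp only: psi_phi)
  also have "\<dots> = (\<Sum>j\<le>m. if j = m then T (phi j) else 0)"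
    by (intro sum.cong refl) auto
  also have "\<dots> = T (phi m)" by simp
  finally show ?thesis .
qed

lemma pderivs_sum: "(pderiv ^^ k) (\<Sum>m\<in>A. smult (c m) (f m)) = (\<Sum>m\<in>A. smult (c m) ((pderiv ^^ k) (f m)))"
  by (simp add: higher_pderiv_sum higher_pderiv_smult)

lemma smult_sum_right: "smult c (sum f A) = (\<Sum>i\<in>A. smult c (f i))"
  by (induction A rule: infinite_finite_induct) (simp_all add: smult_add_right)

lemma rep:
  assumes T: "lin_op_Pn n T" and p: "p \<in> Pn n"
  shows "T p = (\<Sum>k\<le>n. q T k * (pderiv ^^ k) p)"
proof -
  define c where "c m = coeff p m * fact m" for m
  have pe: "p = (\<Sum>m\<le>n. smult (c m) (phi m))" unfolding c_def by (rule basis_expand[OF p])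
  have "T p = (\<Sum>m\<le>n. smult (c m) (T (phi m)))"
    by (subst pe, rule lin_sum[OF T]) (simp add: phi_Pn)
  also have "\<dots> = (\<Sum>m\<le>n. smult (c m) (\<Sum>k\<le>n. q T k * (pderiv ^^ k) (phi m)))"
  proof (intro sum.cong refl arg_cong[where f="smult _"])
    fix m assume "m \<in> {..n}"
    then have mn: "m \<le> n" by simp
    have "(\<Sum>k\<le>n. q T k * (pderiv ^^ k) (phi m)) = (\<Sum>k\<le>n. if k \<le> m then q T k * phi (m - k) else 0)"
      unfolding pderivs_phi by (intro sum.cong refl) auto
    also have "\<dots> = (\<Sum>k\<in>{..n} \<inter> {k. k \<le> m}. q T k * phi (m - k))"
      by (simp add: sum.inter_restrict)
    also have "{..n} \<inter> {k. k \<le> m} = {..m}" using mn by auto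
    also have "(\<Sum>k\<le>m. q T k * phi (m - k)) = T (phi m)" by (rule q_phi)
    finally show "T (phi m) = (\<Sum>k\<le>n. q T k * (pderiv ^^ k) (phi m))" by simp
  qed
  also have "\<dots> = (\<Sum>m\<le>n. \<Sum>k\<le>n. smult (c m) (q T k * (pderiv ^^ k) (phi m)))"
    by (simp only: smult_sum_right)
  also have "\<dots> = (\<Sum>k\<le>n. \<Sum>m\<le>n. smult (c m) (q T k * (pderiv ^^ k) (phi m)))"
    by (rule sum.swap)
  also have "\<dots> = (\<Sum>k\<le>n. q T k * (\<Sum>m\<le>n. smult (c m) ((pderiv ^^ k) (phi m))))"
    by (simp only: sum_distrib_left mult_smult_right)
  also have "\<dots> = (\<Sum>k\<le>n. q T k * (pderiv ^^ k) p)"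
    by (simp only: pderivs_sum[symmetric] pe[symmetric])
  finally show ?thesis .
qed


definition lp :: "complex \<Rightarrow> nat \<Rightarrow> complex poly" where
  "lp a m = smult (1 / of_nat (fact m)) ([:a, 1:] ^ m)"

lemma pderiv_lp: "pderiv (lp a (Suc m)) = lp a m" "pderiv (lp a 0) = 0"
proof -
  have d: "pderiv [:a, 1:] = 1" by (simp add: pderiv_pCons)
  have e: "1 / of_nat (fact (Suc m)) * of_nat (Suc m) = (1 / of_nat (fact m) :: complex)"
    unfolding of_nat_fact using fact_aux[of m] by (simp only: mult.commute)
  have "pderiv (lp a (Suc m)) = smult (1 / of_nat (fact (Suc m))) (smult (of_nat (Suc m)) ([:a, 1:] ^ m))"
    unfolding lp_def pderiv_smult pderiv_power_Suc d by simp
  also have "\<dots> = lp a m" unfolding smult_smult e lp_def ..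
  finally show "pderiv (lp a (Suc m)) = lp a m" .
  show "pderiv (lp a 0) = 0" by (simp add: lp_def)
qed

lemma pderivs_lp: "(pderiv ^^ k) (lp a m) = (if k \<le> m then lp a (m - k) else 0)"
proof (induction k)
  case 0 then show ?case by simp
next
  case (Suc k)
  show ?case
  proof (cases "Suc k \<le> m")
    case True
    have e: "m - k = Suc (m - Suc k)" using True by simp
    have "(pderiv ^^ Suc k) (lp a m) = pderiv (lp a (m - k))" using Suc True by simp
    also have "\<dots> = lp a (m - Suc k)" unfolding e pderiv_lp ..
    finally show ?thesis using True by simp
  next
    case False
    show ?thesis
    proof (cases "k = m")
      case True
      then have "(pderiv ^^ k) (lp a m) = lp a 0" using Suc.IH by simp
      then show ?thesis using False by (simp add: pderiv_lp)
    next
      case False2: False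
      then have "(pderiv ^^ k) (lp a m) = 0" using Suc.IH False by simp
      then show ?thesis using False by simp
    qed
  qed
qed

lemma poly_lp: "poly (lp a m) s = (s + a) ^ m / of_nat (fact m)"
  by (simp add: lp_def poly_power add.commute)

lemma degree_lp: "degree (lp a m) = m"
  by (simp add: lp_def degree_linear_power)

lemma eventually_poly_nonzero:
  fixes p :: "complex poly"
  assumes "p \<noteq> 0"
  shows "eventually (\<lambda>x. poly p x \<noteq> 0) at_infinity"
proof (rule eventually_at_infinityI[of "Max (norm ` {x. poly p x = 0}) + 1"])
  fix x :: complex assume h: "Max (norm ` {x. poly p x = 0}) + 1 \<le> norm x"
  have False when "poly p x = 0"
  proof - 
    define S where "S = norm ` {x. poly p x = 0}"
    have "norm x \<in> S" using that unfolding S_def by auto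
    moreover have "finite S" using \<open>p \<noteq> 0\<close> poly_roots_finite unfolding S_def by blast
    ultimately have "norm x \<le> Max S" by simp
    moreover have "Max S + 1 \<le> norm x" using h unfolding S_def by simp
    ultimately show False by argo
  qed
  then show "poly p x \<noteq> 0" by auto
qed

lemma growth:
  fixes P Q :: "complex poly"
  assumes "coeff P K \<noteq> 0" "degree P \<le> K" "degree Q \<le> K" "coeff Q K = 0" "e > 0"
  shows "eventually (\<lambda>s. norm (poly Q s) \<le> e * norm (poly P s)) at_infinity"
proof (cases "Q = 0")
  case True then show ?thesis using assms(5) by (simp add: always_eventually)
next
  case False
  have dP: "degree P = K" using le_degree[OF assms(1)] assms(2) by (rule le_antisym[rotated])
  have "degree Q \<noteq> K" using False assms(4) by (metis leading_coeff_0_iff)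
  then have "degree P > degree Q" using dP assms(3) by simp
  then have "((\<lambda>x. poly Q x / poly P x) \<longlongrightarrow> 0) at_infinity"
    by (rule poly_divide_tendsto_0_at_infinity)
  then have ev1: "eventually (\<lambda>x. dist (poly Q x / poly P x) 0 < e) at_infinity"
    using assms(5) unfolding tendsto_iff by blast
  have "P \<noteq> 0" using assms(1) by auto
  then have ev2: "eventually (\<lambda>x. poly P x \<noteq> 0) at_infinity" by (rule eventually_poly_nonzero)
  show ?thesis
    using ev1 ev2
  proof eventually_elim
    case (elim s)
    then have "norm (poly Q s) / norm (poly P s) < e" by (simp add: norm_divide)
    then show ?case using elim(2) by (simp add: divide_less_eq)
  qed
qed

lemma Q0: "poly (q T k) 0 = poly (T (phi k)) 0"
proof -
  have "poly (q T k) 0 = (\<Sum>j\<le>k. poly (T (phi j)) 0 * (if k - j = 0 then 1 else 0))"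
    unfolding q_def poly_sum poly_mult
    by (intro sum.cong refl) (simp add: psi_def poly_monom)
  also have "\<dots> = (\<Sum>j\<le>k. if j = k then poly (T (phi j)) 0 else 0)"
    by (intro sum.cong refl) auto
  finally show ?thesis by simp
qed


theorem mainTheorem10:
  fixes n :: nat and T :: "complex poly \<Rightarrow> complex poly" and C :: real
  assumes "n \<ge> 1"
    and "lin_op_Pn n T"
    and "\<exists>p\<in>Pn n. T p \<noteq> 0"
    and "C > 0"
    and "\<forall>f\<in>Pn n. degree f \<ge> 1 \<longrightarrow>
           (\<exists>u\<in>Zset f. \<exists>v\<in>Zset (T f). cmod (u - v) \<le> C)"
  shows "(\<forall>p\<in>Pn n. T p = (\<Sum>k\<le>n. smult (poly (T (phi k)) 0) ((pderiv ^^ k) p)))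
         \<and> poly (T (phi 0)) 0 \<noteq> 0"
proof -
  note Tl = assms(2)
  define Q where "Q k = q T k" for k
  have repQ: "T p = (\<Sum>k\<le>n. Q k * (pderiv ^^ k) p)" if "p \<in> Pn n" for p
    unfolding Q_def using rep[OF Tl that] .
  define K where "K = Max ((\<lambda>k. degree (Q k)) ` {..n})"
  define c where "c k = coeff (Q k) K" for k
  have degQ: "degree (Q k) \<le> K" if "k \<le> n" for k
    unfolding K_def using that by (intro Max_ge) auto
  obtain k1 where k1: "k1 \<le> n" "degree (Q k1) = K"
  proof -
    have "K \<in> (\<lambda>k. degree (Q k)) ` {..n}" unfolding K_def by (intro Max_in) auto
    then show ?thesis using that by auto
  qed
  obtain k0 where k0: "k0 \<le> n" "Q k0 \<noteq> 0"
  proof (rule ccontr)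
    note ex = that
    assume nt: "\<not> thesis"
    have z: "Q k = 0" if kn: "k \<le> n" for k using ex[OF kn] nt by blast
    obtain p where p: "p \<in> Pn n" "T p \<noteq> 0" using assms(3) by blast
    have "T p = 0" using repQ[OF p(1)] z by simp
    then show False using p(2) by simp
  qed
  have exc: "\<exists>k. k \<le> n \<and> c k \<noteq> 0"
  proof (cases "Q k1 = 0")
    case False
    then show ?thesis using k1 unfolding c_def by (intro exI[of _ k1]) auto
  next
    case True
    then have "K = 0" using k1 by simp
    then have "degree (Q k0) = 0" using degQ[OF k0(1)] by simp
    then show ?thesis using k0 \<open>K = 0\<close> unfolding c_def
      by (intro exI[of _ k0]) (auto simp: leading_coeff_0_iff[symmetric] simp del: leading_coeff_0_iff)
  qed
  define i0 where "i0 = (LEAST k. k \<le> n \<and> c k \<noteq> 0)"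
  have i0: "i0 \<le> n" "c i0 \<noteq> 0"
    using LeastI_ex[OF exc] unfolding i0_def by auto
  have below: "c k = 0" if "k < i0" for k
    using not_less_Least[of k "\<lambda>k. k \<le> n \<and> c k \<noteq> 0"] that i0(1) unfolding i0_def[symmetric] by auto
  have i0z: "i0 = 0"
  proof (rule ccontr)
    assume "i0 \<noteq> 0"
    then have m1: "i0 \<ge> 1" by simp
    define m where "m = i0"
    define B where "B = 1 + (\<Sum>k<m. C ^ (m - k) / fact (m - k))"
    have Bpos: "B > 0" unfolding B_def using assms(4) by (intro add_pos_nonneg sum_nonneg) auto
    define e where "e = 1 / (2 * B)"
    have epos: "e > 0" unfolding e_def using Bpos by simp
    have ev: "eventually (\<lambda>s. (\<forall>k\<in>{..<m}. norm (poly (Q k) s) \<le> e * norm (poly (Q m) s)) \<and> poly (Q m) s \<noteq> 0) at_infinity"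
    proof (intro eventually_conj eventually_ball_finite ballI)
      fix k assume "k \<in> {..<m}"
      then show "eventually (\<lambda>s. norm (poly (Q k) s) \<le> e * norm (poly (Q m) s)) at_infinity"
        using i0 below degQ epos unfolding m_def c_def by (intro growth) auto
    next
      show "eventually (\<lambda>s. poly (Q m) s \<noteq> 0) at_infinity"
        using i0 unfolding m_def c_def by (intro eventually_poly_nonzero) auto
    qed auto
    then obtain R where R: "\<And>s. R \<le> norm s \<Longrightarrow> (\<forall>k\<in>{..<m}. norm (poly (Q k) s) \<le> e * norm (poly (Q m) s)) \<and> poly (Q m) s \<noteq> 0"
      unfolding eventually_at_infinity by blast
    define w where "w = complex_of_real (\<bar>R\<bar> + C + 1)"
    define f where "f = lp (- w) m"
    have fP: "f \<in> Pn n" unfolding f_def Pn_def using i0 by (simp add: degree_lp m_def)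
    have fdeg: "degree f \<ge> 1" unfolding f_def using m1 by (simp add: degree_lp m_def)
    have polyTf: "poly (T f) s = poly (Q m) s + (\<Sum>k<m. poly (Q k) s * ((s - w) ^ (m - k) / fact (m - k)))" for s
    proof -
      have "T f = (\<Sum>k\<le>n. Q k * (pderiv ^^ k) f)" by (rule repQ[OF fP])
      also have "\<dots> = (\<Sum>k\<le>n. if k \<le> m then Q k * lp (- w) (m - k) else 0)"
        unfolding f_def pderivs_lp by (intro sum.cong refl) auto
      also have "\<dots> = (\<Sum>k\<in>{..n} \<inter> {k. k \<le> m}. Q k * lp (- w) (m - k))"
        by (simp add: sum.inter_restrict)
      also have "{..n} \<inter> {k. k \<le> m} = insert m {..<m}" using i0 unfolding m_def by auto
      finally have "T f = Q m * lp (- w) 0 + (\<Sum>k<m. Q k * lp (- w) (m - k))" by simp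
      then show ?thesis by (simp add: poly_sum poly_lp)
    qed
    have nz: "poly (T f) s \<noteq> 0" if s: "norm (s - w) \<le> C" for s
    proof -
      have "norm w = \<bar>\<bar>R\<bar> + C + 1\<bar>" unfolding w_def by (rule norm_of_real)
      then have "norm w = \<bar>R\<bar> + C + 1" using assms(4) by simp
      moreover have "norm w \<le> norm s + norm (s - w)"
        using norm_triangle_sub[of w s] by (simp add: norm_minus_commute)
      ultimately have "R \<le> norm s" using s by linarith
      note Rs = R[OF this]
      let ?P = "norm (poly (Q m) s)"
      have Ppos: "?P > 0" using Rs by simp
      have "norm (\<Sum>k<m. poly (Q k) s * ((s - w) ^ (m - k) / fact (m - k)))
            \<le> (\<Sum>k<m. norm (poly (Q k) s * ((s - w) ^ (m - k) / fact (m - k))))"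
        by (rule norm_sum)
      also have "\<dots> \<le> (\<Sum>k<m. (e * ?P) * (C ^ (m - k) / fact (m - k)))"
      proof (intro sum_mono)
        fix k assume k: "k \<in> {..<m}"
        have "norm ((s - w) ^ (m - k) / fact (m - k)) = norm (s - w) ^ (m - k) / fact (m - k)"
          by (simp add: norm_divide norm_power)
        also have "\<dots> \<le> C ^ (m - k) / fact (m - k)"
          using s by (intro divide_right_mono power_mono) auto
        finally have a: "norm ((s - w) ^ (m - k) / fact (m - k)) \<le> C ^ (m - k) / fact (m - k)" .
        have b: "norm (poly (Q k) s) \<le> e * ?P" using Rs k by blast
        show "norm (poly (Q k) s * ((s - w) ^ (m - k) / fact (m - k))) \<le> (e * ?P) * (C ^ (m - k) / fact (m - k))"
          unfolding norm_mult using a b epos by (intro mult_mono) auto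
      qed
      also have "\<dots> = e * ?P * (B - 1)" unfolding B_def by (simp add: sum_distrib_left)
      also have "\<dots> < ?P"
      proof -
        have "e * (B - 1) < 1" unfolding e_def using Bpos by (simp add: field_simps)
        have "e * ?P * (B - 1) = (e * (B - 1)) * ?P" by (simp only: mult_ac)
        also have "\<dots> < 1 * ?P" using Ppos \<open>e * (B - 1) < 1\<close> by (rule mult_strict_right_mono[rotated])
        finally show ?thesis by simp
      qed
      finally have lt: "norm (\<Sum>k<m. poly (Q k) s * ((s - w) ^ (m - k) / fact (m - k))) < ?P" .
      show ?thesis
      proof
        assume "poly (T f) s = 0"
        then have "poly (Q m) s = - (\<Sum>k<m. poly (Q k) s * ((s - w) ^ (m - k) / fact (m - k)))"
          unfolding polyTf by (simp add: eq_neg_iff_add_eq_0)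
        then have "?P = norm (\<Sum>k<m. poly (Q k) s * ((s - w) ^ (m - k) / fact (m - k)))" by simp
        then show False using lt by simp
      qed
    qed
    have Tfnz: "T f \<noteq> 0" using nz[of w] assms(4) by auto
    have fnz: "f \<noteq> 0" using fdeg by auto
    have Zf: "Zset f = {w}"
      using fnz m1 unfolding Zset_def f_def m_def by (auto simp: poly_lp)
    obtain u v where uv: "u \<in> Zset f" "v \<in> Zset (T f)" "cmod (u - v) \<le> C"
      using assms(5) fP fdeg by blast
    have "u = w" using uv(1) Zf by simp
    moreover have "poly (T f) v = 0" using uv(2) Tfnz unfolding Zset_def by simp
    ultimately show False using nz[of v] uv(3) by (simp add: norm_minus_commute)
  qed
  have K0: "K = 0"
  proof (rule ccontr)
    assume "K \<noteq> 0"
    have Tphi: "T (phi n) = (\<Sum>k\<le>n. Q k * phi (n - k))" unfolding Q_def by (rule q_phi[symmetric])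
    have "coeff (T (phi n)) (K + n) = (\<Sum>k\<le>n. coeff (Q k * phi (n - k)) (K + n))"
      unfolding Tphi coeff_sum ..
    also have "\<dots> = (\<Sum>k\<le>n. if k = 0 then c 0 / fact n else 0)"
    proof (intro sum.cong refl)
      fix k assume "k \<in> {..n}"
      then have k: "k \<le> n" by simp
      have "coeff (Q k * phi (n - k)) (K + n) = coeff (Q k) (K + k) / fact (n - k)"
        unfolding phi_def using k
        by (simp add: mult.commute[of "Q k"] coeff_monom_mult)
      also have "\<dots> = (if k = 0 then c 0 / fact n else 0)"
      proof (cases "k = 0")
        case True then show ?thesis unfolding c_def by simp
      next
        case False
        then have "degree (Q k) < K + k" using degQ[OF k] by simp
        then show ?thesis using False by (simp add: coeff_eq_0)
      qed
      finally show "coeff (Q k * phi (n - k)) (K + n) = (if k = 0 then c 0 / fact n else 0)" .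
    qed
    also have "\<dots> = c 0 / fact n" by simp
    finally have "coeff (T (phi n)) (K + n) \<noteq> 0" using i0 i0z by simp
    then have "K + n \<le> degree (T (phi n))" by (rule le_degree)
    moreover have "T (phi n) \<in> Pn n" using Tl phi_Pn[of n n] unfolding lin_op_Pn_def by blast
    ultimately show False using \<open>K \<noteq> 0\<close> unfolding Pn_def by simp
  qed
  have Qconst: "Q k = [:poly (T (phi k)) 0:]" if "k \<le> n" for k
  proof -
    have "degree (Q k) = 0" using degQ[OF that] K0 by simp
    then have "Q k = [:coeff (Q k) 0:]" by (simp add: degree_0_id)
    also have "coeff (Q k) 0 = poly (T (phi k)) 0" unfolding poly_0_coeff_0[symmetric] Q_def by (rule Q0)
    finally show ?thesis .
  qed
  have part1: "\<forall>p\<in>Pn n. T p = (\<Sum>k\<le>n. smult (poly (T (phi k)) 0) ((pderiv ^^ k) p))"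
  proof
    fix p assume p: "p \<in> Pn n"
    show "T p = (\<Sum>k\<le>n. smult (poly (T (phi k)) 0) ((pderiv ^^ k) p))"
      unfolding repQ[OF p] by (intro sum.cong refl) (simp add: Qconst)
  qed
  have "poly (T (phi 0)) 0 = c 0"
    unfolding c_def K0 poly_0_coeff_0[symmetric] Q_def by (rule Q0[symmetric])
  then have part2: "poly (T (phi 0)) 0 \<noteq> 0" using i0 i0z by simp
  show ?thesis using part1 part2 by blast
qed

end
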